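(* (1) For every $\varepsilon\ge 0$, the optimal partition selection primitive for $(\varepsilon,0)$-differential privacy is $\pi_{\mathrm{opt}}(n)=0$ for all $n\in\mathbb{N}$. (2) For every $\delta\in[0,1]$, the optimal partition selection primitive for $(0,\delta)$-differential privacy is $\pi_{\mathrm{opt}}(n)=\min(1,n\delta)$ for all $n\in\mathbb{N}$.
   Context: $\mathbb{N}=\{0,1,2,\dots\}$. A partition selection primitive is a function $\pi:\mathbb{N}\to[0,1]$ with $\pi(0)=0$; it is interpreted as: count the number $n$ of users in a partition and release (keep) the partition with probability $\pi(n)$, drop it otherwise. Let $\rho_\pi(n)$ be the random variable in $\{\mathrm{drop},\mathrm{keep}\}$ equal to keep with probability $\pi(n)$ and drop with probability $1-\pi(n)$. The primitive $\pi$ is $(\varepsilon,\delta)$-differentially private if for all $n,n'\in\mathbb{N}$ with $|n-n'|=1$ and all $S\subseteq\{\mathrm{drop},\mathrm{keep}\}$, $\Pr[\rho_\pi(n)\in S]\le e^{\varepsilon}\Pr[\rho_\pi(n')\in S]+\delta$. A primitive $\pi_{\mathrm{opt}}$ is optimal for $(\varepsilon,\delta)$-DP if it is $(\varepsilon,\delta)$-differentially private and for every $(\varepsilon,\delta)$-differentially private partition selection primitive $\pi$ and every $n\in\mathbb{N}$, $\pi(n)\le\pi_{\mathrm{opt}}(n)$. *)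

theory Defs
  imports Complex_Main
begin

datatype outcome = Drop | Keep

definition is_primitive :: "(nat \<Rightarrow> real) \<Rightarrow> bool" where
  "is_primitive p \<longleftrightarrow> p 0 = 0 \<and> (\<forall>n. 0 \<le> p n \<and> p n \<le> 1)"

text \<open>Probability that rho_p(n) lies in S.\<close>
definition rho_prob :: "(nat \<Rightarrow> real) \<Rightarrow> nat \<Rightarrow> outcome set \<Rightarrow> real" where
  "rho_prob p n S = (if Keep \<in> S then p n else 0) + (if Drop \<in> S then 1 - p n else 0)"

definition is_dp :: "real \<Rightarrow> real \<Rightarrow> (nat \<Rightarrow> real) \<Rightarrow> bool" where
  "is_dp \<epsilon> \<delta> p \<longleftrightarrow> is_primitive p \<and>
     (\<forall>n n' S. \<bar>int n - int n'\<bar> = 1 \<longrightarrow>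
        rho_prob p n S \<le> exp \<epsilon> * rho_prob p n' S + \<delta>)"

definition is_optimal :: "real \<Rightarrow> real \<Rightarrow> (nat \<Rightarrow> real) \<Rightarrow> bool" where
  "is_optimal \<epsilon> \<delta> p_opt \<longleftrightarrow> is_dp \<epsilon> \<delta> p_opt \<and>
     (\<forall>p. is_dp \<epsilon> \<delta> p \<longrightarrow> (\<forall>n. p n \<le> p_opt n))"

end

theory Submission
  imports Defs
begin

lemma dp_step:
  assumes "is_dp e d p"
  shows "p (Suc n) \<le> exp e * p n + d"
proof -
  have "\<bar>int (Suc n) - int n\<bar> = 1" by simp
  with assms have "rho_prob p (Suc n) {Keep} \<le> exp e * rho_prob p n {Keep} + d"
    unfolding is_dp_def by blast
  then show ?thesis by (simp add: rho_prob_def)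
qed

lemma part1:
  assumes "(e::real) \<ge> 0"
  shows "is_optimal e 0 (\<lambda>n. 0)"
  unfolding is_optimal_def
proof (intro conjI allI impI)
  have "exp e \<ge> 1" using assms by simp
  then show "is_dp e 0 (\<lambda>n. 0)"
    unfolding is_dp_def is_primitive_def rho_prob_def by auto
next
  fix p :: "nat \<Rightarrow> real" and n
  assume dp: "is_dp e 0 p"
  then have pr: "p 0 = 0" "\<And>n. 0 \<le> p n" unfolding is_dp_def is_primitive_def by auto
  have "p n \<le> 0"
  proof (induction n)
    case 0 then show ?case using pr by simp
  next
    case (Suc n)
    have "p n = 0" using Suc pr(2)[of n] by linarith
    then show ?case using dp_step[OF dp, of n] by simp
  qed
  then show "p n \<le> 0" .
qed

lemma part2:
  assumes "0 \<le> (d::real)" "d \<le> 1"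
  shows "is_optimal 0 d (\<lambda>n. min 1 (real n * d))"
  unfolding is_optimal_def
proof (intro conjI allI impI)
  let ?f = "\<lambda>n. min 1 (real n * d)"
  have lip: "\<bar>?f n - ?f n'\<bar> \<le> d" if "\<bar>int n - int n'\<bar> = 1" for n n'
  proof -
    have "n = Suc n' \<or> n' = Suc n" using that by linarith
    then show ?thesis using assms by (auto simp: algebra_simps min_def)
  qed
  show "is_dp 0 d ?f"
    unfolding is_dp_def is_primitive_def
  proof (intro conjI allI impI)
    fix n n' S assume h: "\<bar>int n - int n'\<bar> = 1"
    have l: "\<bar>?f n - ?f n'\<bar> \<le> d" by (rule lip[OF h])
    then show "rho_prob ?f n S \<le> exp 0 * rho_prob ?f n' S + d"
      unfolding rho_prob_def using assms by (auto simp: abs_le_iff)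
  qed (use assms in auto)
next
  fix p :: "nat \<Rightarrow> real" and n
  assume dp: "is_dp 0 d p"
  then have pr: "p 0 = 0" "\<And>n. p n \<le> 1" unfolding is_dp_def is_primitive_def by auto
  have "p n \<le> real n * d"
  proof (induction n)
    case 0 then show ?case using pr by simp
  next
    case (Suc n)
    then show ?case using dp_step[OF dp, of n] by (simp add: algebra_simps)
  qed
  then show "p n \<le> min 1 (real n * d)" using pr(2)[of n] by simp
qed

theorem theorem2:
  shows "(\<forall>\<epsilon>::real. \<epsilon> \<ge> 0 \<longrightarrow> is_optimal \<epsilon> 0 (\<lambda>n. 0))
       \<and> (\<forall>\<delta>::real. 0 \<le> \<delta> \<and> \<delta> \<le> 1 \<longrightarrow> is_optimal 0 \<delta> (\<lambda>n. min 1 (real n * \<delta>)))"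
  using part1 part2 by auto

end
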